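(* Let $L>0$, $\mathbb{T}=\mathbb{R}/L\mathbb{Z}$, let $\gamma_k\in(0,1]$ for all $k\in\mathbb{Z}$, let $s>0$, and set $\delta^{(s)}_k=\frac{(1+k^2)^{s+1}}{\gamma_k^s}$. Let $u_0\in H_{\delta^{(s)}}(\mathbb{T})$ and let $u$ be the solution of the linear equation \[ u_t-u_{txx}+u_x+\mathscr{L}_\gamma(u)=0,\quad x\in\mathbb{T},\qquad u(0)=u_0. \] Then for all $t>0$, \[ |u(t)|_{H^1}^2\le\min\Big(e^{-s}\Big(\frac{s}{2t}\Big)^s|u_0|_{\delta^{(s)}}^2,\ |u_0|_{H^1}^2\Big). \]
   Context: For $u\in L^2(\mathbb{T})$, $\hat u_k$ is its $k$-th Fourier coefficient; in symbols $k$ stands for the frequency $2\pi k/L$. $\mathscr{L}_\gamma$ is the Fourier multiplier $\widehat{\mathscr{L}_\gamma(u)}_k=\gamma_k\hat u_k$. For a positive sequence $(\alpha_k)$, $H_\alpha(\mathbb{T})=\{u : \sum_k\alpha_k|\hat u_k|^2<\infty\}$ with $|u|_\alpha^2=\sum_k\alpha_k|\hat u_k|^2$. The $H^1$ norm is $|u|_{H^1}^2=\sum_k(1+k^2)|\hat u_k|^2$. The solution is given by $\hat u_k(t)=e^{-\frac{\gamma_k+ik}{1+k^2}t}\hat u_k(0)$. *)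

theory Defs
  imports "HOL-Analysis.Analysis"
begin

(* A function u in L^2(T), T = R/LZ, is represented by its Fourier coefficient
   sequence c :: int => complex (square summable, by Riesz-Fischer/Parseval). *)

definition freq :: "real \<Rightarrow> int \<Rightarrow> real" where
  "freq L k = 2 * pi * real_of_int k / L"

definition in_L2 :: "(int \<Rightarrow> complex) \<Rightarrow> bool" where
  "in_L2 c \<longleftrightarrow> (\<lambda>k. (cmod (c k))^2) summable_on UNIV"

definition in_H :: "(int \<Rightarrow> real) \<Rightarrow> (int \<Rightarrow> complex) \<Rightarrow> bool" where
  "in_H \<alpha> c \<longleftrightarrow> in_L2 c \<and> (\<lambda>k. \<alpha> k * (cmod (c k))^2) summable_on UNIV"

definition Hnorm2 :: "(int \<Rightarrow> real) \<Rightarrow> (int \<Rightarrow> complex) \<Rightarrow> real" where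
  "Hnorm2 \<alpha> c = (\<Sum>\<^sub>\<infinity>k. \<alpha> k * (cmod (c k))^2)"

definition H1norm2 :: "real \<Rightarrow> (int \<Rightarrow> complex) \<Rightarrow> real" where
  "H1norm2 L c = Hnorm2 (\<lambda>k. 1 + (freq L k)^2) c"

definition delta :: "real \<Rightarrow> (int \<Rightarrow> real) \<Rightarrow> real \<Rightarrow> int \<Rightarrow> real" where
  "delta L \<gamma> s k = (1 + (freq L k)^2) powr (s + 1) / (\<gamma> k) powr s"

(* Fourier coefficients of the solution u(t) of u_t - u_txx + u_x + L_gamma(u) = 0, u(0)=u0 *)
definition sol :: "real \<Rightarrow> (int \<Rightarrow> real) \<Rightarrow> (int \<Rightarrow> complex) \<Rightarrow> real \<Rightarrow> int \<Rightarrow> complex" where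
  "sol L \<gamma> c t k =
     exp (- ((complex_of_real (\<gamma> k) + \<i> * complex_of_real (freq L k))
             / complex_of_real (1 + (freq L k)^2)) * complex_of_real t) * c k"

end

theory Submission
  imports Defs
begin

lemma key_ineq:
  fixes x s :: real
  assumes "x > 0" "s > 0"
  shows "exp (- x) \<le> exp (- s) * (s / x) powr s"
proof -
  have "ln (x / s) \<le> x / s - 1" using assms by (intro ln_le_minus_one) simp
  hence "s * ln (x / s) \<le> x - s" using assms by (simp add: field_simps)
  hence "s * (ln x - ln s) \<le> x - s" using assms by (simp add: ln_div)
  hence "- x \<le> - s + s * (ln s - ln x)" by (simp add: algebra_simps)
  hence "exp (- x) \<le> exp (- s + s * (ln s - ln x))" by simp
  also have "\<dots> = exp (- s) * (s / x) powr s"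
    using assms by (simp add: exp_add[symmetric] powr_def ln_div mult.commute)
  finally show ?thesis .
qed

lemma norm_sol:
  assumes "a = 1 + (freq L k)^2"
  shows "(cmod (sol L \<gamma> c t k))^2 = exp (- (2 * \<gamma> k * t / a)) * (cmod (c k))^2"
proof -
  have a: "a > 0" using assms by (simp add: add_pos_nonneg)
  have "Re (- ((complex_of_real (\<gamma> k) + \<i> * complex_of_real (freq L k))
             / complex_of_real a) * complex_of_real t) = - (\<gamma> k * t / a)"
  proof -
    have "(complex_of_real (\<gamma> k) + \<i> * complex_of_real (freq L k)) / complex_of_real a
        = complex_of_real (\<gamma> k / a) + \<i> * complex_of_real (freq L k / a)"
      using a by (simp add: field_simps)
    thus ?thesis by simp
  qed
  hence "cmod (sol L \<gamma> c t k) = exp (- (\<gamma> k * t / a)) * cmod (c k)"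
    unfolding sol_def assms[symmetric] by (simp add: norm_mult)
  hence "(cmod (sol L \<gamma> c t k))^2 = (exp (- (\<gamma> k * t / a)))^2 * (cmod (c k))^2"
    by (simp add: power_mult_distrib)
  also have "(exp (- (\<gamma> k * t / a)))^2 = exp (- (2 * \<gamma> k * t / a))"
    by (simp add: power2_eq_square exp_add[symmetric])
  finally show ?thesis .
qed

theorem mainTheorem5:
  fixes L s t :: real and \<gamma> :: "int \<Rightarrow> real" and u0 :: "int \<Rightarrow> complex"
  assumes "L > 0"
    and "\<forall>k. 0 < \<gamma> k \<and> \<gamma> k \<le> 1"
    and "s > 0"
    and "in_H (delta L \<gamma> s) u0"
    and "t > 0"
  shows "H1norm2 L (sol L \<gamma> u0 t)
     \<le> min (exp (- s) * (s / (2 * t)) powr s * Hnorm2 (delta L \<gamma> s) u0) (H1norm2 L u0)"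
proof -
  define a where "a k = 1 + (freq L k)^2" for k
  define C where "C = exp (- s) * (s / (2 * t)) powr s"
  have a1: "a k \<ge> 1" for k by (simp add: a_def)
  have a0: "a k \<ge> 0" for k using a1[of k] by linarith
  have g: "0 < \<gamma> k" "\<gamma> k \<le> 1" for k using assms(2) by auto
  have sumD: "(\<lambda>k. delta L \<gamma> s k * (cmod (u0 k))^2) summable_on UNIV"
    using assms(4) by (simp add: in_H_def)
  have da: "a k \<le> delta L \<gamma> s k" for k
  proof -
    have "a k = a k powr 1" using a1[of k] by simp
    also have "\<dots> \<le> a k powr (s + 1)" using a1[of k] assms(3) by (intro powr_mono) auto
    also have "\<dots> \<le> a k powr (s + 1) / \<gamma> k powr s"
    proof -
      have "\<gamma> k powr s \<le> 1" using g[of k] assms(3) by (simp add: powr_le1)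
      moreover have "\<gamma> k powr s > 0" using g[of k] by simp
      moreover have "a k powr (s+1) \<ge> 0" by simp
      ultimately have "a k powr (s + 1) * \<gamma> k powr s \<le> a k powr (s + 1)"
        by (simp add: mult_left_le)
      thus ?thesis using \<open>\<gamma> k powr s > 0\<close> by (simp add: le_divide_eq)
    qed
    finally show ?thesis by (simp add: delta_def a_def)
  qed
  have sumA: "(\<lambda>k. a k * (cmod (u0 k))^2) summable_on UNIV"
    by (rule summable_on_comparison_test[OF sumD]) (use a0 da in \<open>auto intro: mult_right_mono\<close>)
  have solk: "(cmod (sol L \<gamma> u0 t k))^2 = exp (- (2 * \<gamma> k * t / a k)) * (cmod (u0 k))^2" for k
    by (rule norm_sol) (simp add: a_def)
  have le1: "a k * (cmod (sol L \<gamma> u0 t k))^2 \<le> a k * (cmod (u0 k))^2" for k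
    unfolding solk using a1[of k] g[of k] assms(5)
    by (intro mult_left_mono mult_left_le_one_le) auto
  have nn: "0 \<le> a k * (cmod (sol L \<gamma> u0 t k))^2" for k using a1[of k] by simp
  have sumS: "(\<lambda>k. a k * (cmod (sol L \<gamma> u0 t k))^2) summable_on UNIV"
    by (rule summable_on_comparison_test[OF sumA]) (use le1 nn in auto)
  have le2: "a k * (cmod (sol L \<gamma> u0 t k))^2 \<le> C * (delta L \<gamma> s k * (cmod (u0 k))^2)" for k
  proof -
    have x: "2 * \<gamma> k * t / a k > 0" using a1[of k] g[of k] assms(5) by simp
    have "exp (- (2 * \<gamma> k * t / a k)) \<le> exp (- s) * (s / (2 * \<gamma> k * t / a k)) powr s"
      by (rule key_ineq[OF x assms(3)])
    also have "(s / (2 * \<gamma> k * t / a k)) = (s / (2*t)) * a k / \<gamma> k"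
      using a1[of k] g[of k] assms(5) by (simp add: field_simps)
    also have "\<dots> powr s = (s / (2*t)) powr s * a k powr s / \<gamma> k powr s"
      using a1[of k] g[of k] assms(3,5) by (simp add: powr_divide powr_mult)
    finally have e: "exp (- (2 * \<gamma> k * t / a k)) \<le> C * (a k powr s / \<gamma> k powr s)"
      by (simp add: C_def)
    have "a k * exp (- (2 * \<gamma> k * t / a k)) \<le> a k * (C * (a k powr s / \<gamma> k powr s))"
      using e a1[of k] by (intro mult_left_mono) auto
    also have "\<dots> = C * delta L \<gamma> s k"
      using a1[of k] by (simp add: delta_def a_def[symmetric] powr_add)
    finally have "a k * exp (- (2 * \<gamma> k * t / a k)) \<le> C * delta L \<gamma> s k" .
    hence "a k * exp (- (2 * \<gamma> k * t / a k)) * (cmod (u0 k))^2 \<le> C * delta L \<gamma> s k * (cmod (u0 k))^2"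
      by (intro mult_right_mono) auto
    thus ?thesis unfolding solk by (simp add: mult.assoc)
  qed
  have H1: "H1norm2 L v = (\<Sum>\<^sub>\<infinity>k. a k * (cmod (v k))^2)" for v
    by (simp add: H1norm2_def Hnorm2_def a_def)
  have A: "H1norm2 L (sol L \<gamma> u0 t) \<le> H1norm2 L u0"
    unfolding H1 by (rule infsum_mono[OF sumS sumA le1])
  have B: "H1norm2 L (sol L \<gamma> u0 t) \<le> C * Hnorm2 (delta L \<gamma> s) u0"
  proof -
    have "H1norm2 L (sol L \<gamma> u0 t) \<le> (\<Sum>\<^sub>\<infinity>k. C * (delta L \<gamma> s k * (cmod (u0 k))^2))"
      unfolding H1 by (rule infsum_mono[OF sumS summable_on_cmult_right[OF sumD] le2])
    also have "\<dots> = C * Hnorm2 (delta L \<gamma> s) u0"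
      unfolding Hnorm2_def by (rule infsum_cmult_right) (use sumD in auto)
    finally show ?thesis .
  qed
  show ?thesis using A B by (simp add: C_def)
qed

end
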